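(* Let $Q$ be a multiplicative graph. Every $k$-face of a product $n$-cube of $Q$ is a product $k$-cube of $Q$.
   Context: Graphs are directed graphs $(V\overset{s}{\underset{t}{\leftleftarrows}}A)$, possibly with loops and multiple edges; the Cartesian product $Q_1\,\square\,Q_2$ has vertex set $V_1\times V_2$, arrows $A_1\times V_2\sqcup V_1\times A_2$, source $s_1\times\mathrm{id}\sqcup\mathrm{id}\times s_2$, target $t_1\times\mathrm{id}\sqcup\mathrm{id}\times t_2$; this product is associative up to canonical isomorphism. A multiplicative graph is a graph $Q$ with a morphism $\mu:Q\,\square\,Q\to Q$ such that $\mu\circ(\mu\,\square\,\mathrm{id})=\mu\circ(\mathrm{id}\,\square\,\mu)$; let $\mu_n:Q^{\square n}\to Q$ denote the iterated multiplication. Let $\mathrm{Q}_1$ be the graph with two vertices and one arrow between them, and $\mathrm{Q}_n=\mathrm{Q}_1\,\square\cdots\square\,\mathrm{Q}_1$ ($n$ factors). A $k$-face of $\mathrm{Q}_n$ is the subgraph (isomorphic to $\mathrm{Q}_k$) obtained by replacing $n-k$ of the factors $\mathrm{Q}_1$ by one of its vertices. An $n$-cube of $Q$ is a graph morphism $\mathrm{Q}_n\to Q$, and its $k$-faces are its restrictions to the $k$-faces of $\mathrm{Q}_n$. Each arrow $a$ of $Q$ gives a morphism $a:\mathrm{Q}_1\to Q$. A product $n$-cube is an $n$-cube of the form $\mu_n\circ(a_1\,\square\cdots\square\,a_n):\mathrm{Q}_n\to Q$ for arrows $a_1,\dots,a_n$ of $Q$. *)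

theory Defs
  imports Main
begin

record ('v, 'a) graph =
  verts :: "'v set"
  arcs  :: "'a set"
  src   :: "'a \<Rightarrow> 'v"
  tgt   :: "'a \<Rightarrow> 'v"

definition wf_graph :: "('v, 'a) graph \<Rightarrow> bool" where
  "wf_graph G \<longleftrightarrow> (\<forall>e\<in>arcs G. src G e \<in> verts G \<and> tgt G e \<in> verts G)"

definition graph_hom ::
  "('v1, 'a1) graph \<Rightarrow> ('v2, 'a2) graph \<Rightarrow> ('v1 \<Rightarrow> 'v2) \<Rightarrow> ('a1 \<Rightarrow> 'a2) \<Rightarrow> bool" where
  "graph_hom G H fv fa \<longleftrightarrow>
     (\<forall>x\<in>verts G. fv x \<in> verts H) \<and>
     (\<forall>e\<in>arcs G. fa e \<in> arcs H \<and> src H (fa e) = fv (src G e) \<and> tgt H (fa e) = fv (tgt G e))"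

definition cart_prod ::
  "('v1, 'a1) graph \<Rightarrow> ('v2, 'a2) graph \<Rightarrow> ('v1 \<times> 'v2, ('a1 \<times> 'v2) + ('v1 \<times> 'a2)) graph" where
  "cart_prod G H = \<lparr> verts = verts G \<times> verts H,
     arcs = (arcs G \<times> verts H) <+> (verts G \<times> arcs H),
     src = case_sum (\<lambda>(a, y). (src G a, y)) (\<lambda>(x, b). (x, src H b)),
     tgt = case_sum (\<lambda>(a, y). (tgt G a, y)) (\<lambda>(x, b). (x, tgt H b)) \<rparr>"

text \<open>Product of morphisms f \<box> g (arc map; vertex map is map_prod).\<close>
definition prod_arc_map ::
  "('v1 \<Rightarrow> 'w1) \<Rightarrow> ('a1 \<Rightarrow> 'b1) \<Rightarrow> ('v2 \<Rightarrow> 'w2) \<Rightarrow> ('a2 \<Rightarrow> 'b2)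
   \<Rightarrow> ('a1 \<times> 'v2) + ('v1 \<times> 'a2) \<Rightarrow> ('b1 \<times> 'w2) + ('w1 \<times> 'b2)" where
  "prod_arc_map fv fa gv ga = case_sum (\<lambda>(a, y). Inl (fa a, gv y)) (\<lambda>(x, b). Inr (fv x, ga b))"

definition assoc_v :: "('x \<times> 'y) \<times> 'z \<Rightarrow> 'x \<times> ('y \<times> 'z)" where
  "assoc_v = (\<lambda>((x, y), z). (x, (y, z)))"

definition assoc_a ::
  "((('a1 \<times> 'v2) + ('v1 \<times> 'a2)) \<times> 'v3) + (('v1 \<times> 'v2) \<times> 'a3)
   \<Rightarrow> ('a1 \<times> ('v2 \<times> 'v3)) + ('v1 \<times> (('a2 \<times> 'v3) + ('v2 \<times> 'a3)))" where
  "assoc_a = case_sum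
     (\<lambda>(e, z). case e of Inl (a, y) \<Rightarrow> Inl (a, (y, z)) | Inr (x, b) \<Rightarrow> Inr (x, Inl (b, z)))
     (\<lambda>((x, y), c). Inr (x, Inr (y, c)))"

text \<open>Multiplicative graph: mu : Q \<box> Q \<rightarrow> Q with mu \<circ> (mu \<box> id) = mu \<circ> (id \<box> mu)
  (up to the canonical associator), as equality of maps on the carriers.\<close>
definition multiplicative ::
  "('v, 'a) graph \<Rightarrow> ('v \<times> 'v \<Rightarrow> 'v) \<Rightarrow> (('a \<times> 'v) + ('v \<times> 'a) \<Rightarrow> 'a) \<Rightarrow> bool" where
  "multiplicative Q mv ma \<longleftrightarrow>
     wf_graph Q \<and> graph_hom (cart_prod Q Q) Q mv ma \<and>
     (\<forall>p\<in>verts (cart_prod (cart_prod Q Q) Q).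
        mv (map_prod mv id p) = mv (map_prod id mv (assoc_v p))) \<and>
     (\<forall>e\<in>arcs (cart_prod (cart_prod Q Q) Q).
        ma (prod_arc_map mv ma id id e) = ma (prod_arc_map id id mv ma (assoc_a e)))"

section \<open>Iterated multiplication of cells (vertices Inl, arcs Inr)\<close>

fun cell_mul :: "('v \<times> 'v \<Rightarrow> 'v) \<Rightarrow> (('a \<times> 'v) + ('v \<times> 'a) \<Rightarrow> 'a)
    \<Rightarrow> 'v + 'a \<Rightarrow> 'v + 'a \<Rightarrow> 'v + 'a" where
  "cell_mul mv ma (Inl x) (Inl y) = Inl (mv (x, y))"
| "cell_mul mv ma (Inl x) (Inr b) = Inr (ma (Inr (x, b)))"
| "cell_mul mv ma (Inr a) (Inl y) = Inr (ma (Inl (a, y)))"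
| "cell_mul mv ma (Inr a) (Inr b) = undefined"

text \<open>mu_n, bracketed to the right (any bracketing agrees by associativity).\<close>
fun mu_cells :: "('v \<times> 'v \<Rightarrow> 'v) \<Rightarrow> (('a \<times> 'v) + ('v \<times> 'a) \<Rightarrow> 'a)
    \<Rightarrow> ('v + 'a) list \<Rightarrow> 'v + 'a" where
  "mu_cells mv ma [c] = c"
| "mu_cells mv ma (c # cs) = cell_mul mv ma c (mu_cells mv ma cs)"
| "mu_cells mv ma [] = undefined"

text \<open>Q_n = Q_1 \<box> ... \<box> Q_1 up to canonical isomorphism: vertices are bit strings of
  length n; the arc (i, w) (with w ! i = False) lies in factor i and goes from w to w[i := True].\<close>
definition cube_graph :: "nat \<Rightarrow> (bool list, nat \<times> bool list) graph" where
  "cube_graph n = \<lparr> verts = {w. length w = n},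
     arcs = {(i, w). i < n \<and> length w = n \<and> \<not> w ! i},
     src = (\<lambda>(i, w). w),
     tgt = (\<lambda>(i, w). w[i := True]) \<rparr>"

definition is_cube :: "('v, 'a) graph \<Rightarrow> nat \<Rightarrow> (bool list \<Rightarrow> 'v) \<Rightarrow> (nat \<times> bool list \<Rightarrow> 'a) \<Rightarrow> bool" where
  "is_cube Q n cv ca \<longleftrightarrow> graph_hom (cube_graph n) Q cv ca"

text \<open>mu_n \<circ> (a_1 \<box> ... \<box> a_n) on vertices and arcs of Q_n.\<close>
definition prod_cube_v :: "('v \<times> 'v \<Rightarrow> 'v) \<Rightarrow> (('a \<times> 'v) + ('v \<times> 'a) \<Rightarrow> 'a)
    \<Rightarrow> ('v, 'a) graph \<Rightarrow> 'a list \<Rightarrow> bool list \<Rightarrow> 'v" where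
  "prod_cube_v mv ma Q as w =
     projl (mu_cells mv ma (map (\<lambda>j. Inl (if w ! j then tgt Q (as ! j) else src Q (as ! j)))
                                [0..<length as]))"

definition prod_cube_a :: "('v \<times> 'v \<Rightarrow> 'v) \<Rightarrow> (('a \<times> 'v) + ('v \<times> 'a) \<Rightarrow> 'a)
    \<Rightarrow> ('v, 'a) graph \<Rightarrow> 'a list \<Rightarrow> nat \<times> bool list \<Rightarrow> 'a" where
  "prod_cube_a mv ma Q as e = (case e of (i, w) \<Rightarrow>
     projr (mu_cells mv ma (map (\<lambda>j. if j = i then Inr (as ! j)
                    else Inl (if w ! j then tgt Q (as ! j) else src Q (as ! j)))
                                [0..<length as])))"

definition is_product_cube :: "('v, 'a) graph \<Rightarrow> ('v \<times> 'v \<Rightarrow> 'v) \<Rightarrow> (('a \<times> 'v) + ('v \<times> 'a) \<Rightarrow> 'a)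
    \<Rightarrow> nat \<Rightarrow> (bool list \<Rightarrow> 'v) \<Rightarrow> (nat \<times> bool list \<Rightarrow> 'a) \<Rightarrow> bool" where
  "is_product_cube Q mv ma n cv ca \<longleftrightarrow>
     (\<exists>as. length as = n \<and> set as \<subseteq> arcs Q \<and>
        (\<forall>w\<in>verts (cube_graph n). cv w = prod_cube_v mv ma Q as w) \<and>
        (\<forall>e\<in>arcs (cube_graph n). ca e = prod_cube_a mv ma Q as e))"

text \<open>A face of Q_n is described by a pattern of length n: None marks a free factor,
  Some b marks a factor replaced by vertex b of Q_1. The inclusion Q_k \<rightarrow> Q_n
  (k = number of None's) fills the free positions in increasing order.\<close>
fun face_fill :: "bool option list \<Rightarrow> bool list \<Rightarrow> bool list" where
  "face_fill [] ws = []"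
| "face_fill (None # p) (w # ws) = w # face_fill p ws"
| "face_fill (None # p) [] = undefined # face_fill p []"
| "face_fill (Some b # p) ws = b # face_fill p ws"

definition free_positions :: "bool option list \<Rightarrow> nat list" where
  "free_positions p = filter (\<lambda>j. p ! j = None) [0..<length p]"

definition face_dim :: "bool option list \<Rightarrow> nat" where
  "face_dim p = length (free_positions p)"

definition face_arc :: "bool option list \<Rightarrow> nat \<times> bool list \<Rightarrow> nat \<times> bool list" where
  "face_arc p e = (case e of (i, w) \<Rightarrow> (free_positions p ! i, face_fill p w))"

end

theory Submission imports Defs begin

definition vc :: "('v,'a) graph \<Rightarrow> 'a list \<Rightarrow> bool list \<Rightarrow> ('v+'a) list" where
 "vc Q as w = map (\<lambda>j. Inl (if w ! j then tgt Q (as ! j) else src Q (as ! j))) [0..<length as]"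
definition ac :: "('v,'a) graph \<Rightarrow> 'a list \<Rightarrow> nat \<Rightarrow> bool list \<Rightarrow> ('v+'a) list" where
 "ac Q as i w = map (\<lambda>j. if j = i then Inr (as ! j)
                    else Inl (if w ! j then tgt Q (as ! j) else src Q (as ! j))) [0..<length as]"

lemma vc_Nil[simp]: "vc Q [] w = []" by (simp add: vc_def)
lemma vc_Cons[simp]: "vc Q (a#as) (b#w) = Inl (if b then tgt Q a else src Q a) # vc Q as w"
  by (simp add: vc_def upt_conv_Cons map_Suc_upt[symmetric] del: upt_Suc)
lemma ac_Cons0[simp]: "ac Q (a#as) 0 (b#w) = Inr a # vc Q as w"
  by (simp add: vc_def ac_def upt_conv_Cons map_Suc_upt[symmetric] del: upt_Suc)
lemma ac_ConsS[simp]: "ac Q (a#as) (Suc i) (b#w) = Inl (if b then tgt Q a else src Q a) # ac Q as i w"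
  by (simp add: ac_def upt_conv_Cons map_Suc_upt[symmetric] del: upt_Suc)

lemma mu_Cons: "cs \<noteq> [] \<Longrightarrow> mu_cells mv ma (c#cs) = cell_mul mv ma c (mu_cells mv ma cs)"
  by (cases cs) auto

lemma fp_None[simp]: "free_positions (None # p) = 0 # map Suc (free_positions p)"
  by (simp add: free_positions_def upt_conv_Cons map_Suc_upt[symmetric] filter_map o_def del: upt_Suc)
lemma fp_Some[simp]: "free_positions (Some b # p) = map Suc (free_positions p)"
  by (simp add: free_positions_def upt_conv_Cons map_Suc_upt[symmetric] filter_map o_def del: upt_Suc)
lemma fd_None[simp]: "face_dim (None # p) = Suc (face_dim p)" by (simp add: face_dim_def)
lemma fd_Some[simp]: "face_dim (Some b # p) = face_dim p" by (simp add: face_dim_def)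
lemma fd_le: "face_dim p \<le> length p" unfolding face_dim_def free_positions_def
  by (metis length_filter_le length_upt minus_nat.diff_0)
lemma ff_len[simp]: "length (face_fill p w) = length p"
  by (induction p w rule: face_fill.induct) auto
lemma fp_lt: "i < face_dim p \<Longrightarrow> free_positions p ! i < length p"
proof -
  assume "i < face_dim p"
  then have "free_positions p ! i \<in> set (free_positions p)" by (simp add: face_dim_def)
  then show ?thesis by (simp add: free_positions_def)
qed
lemma ff_fp: "length w = face_dim p \<Longrightarrow> i < face_dim p \<Longrightarrow> face_fill p w ! (free_positions p ! i) = w ! i"
proof (induction p arbitrary: w i)
  case Nil then show ?case by (simp add: face_dim_def free_positions_def)
next
  case (Cons q p)
  show ?case
  proof (cases q)
    case None
    with Cons obtain w0 w' where w: "w = w0 # w'" by (cases w) auto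
    show ?thesis using Cons None w by (cases i) (auto simp: face_dim_def)
  next
    case (Some b) then show ?thesis using Cons by (auto simp: face_dim_def)
  qed
qed

context
  fixes Q :: "('v, 'a) graph" and mv ma
  assumes M: "multiplicative Q mv ma"
begin

lemma wf: "e \<in> arcs Q \<Longrightarrow> src Q e \<in> verts Q \<and> tgt Q e \<in> verts Q"
  using M by (auto simp: multiplicative_def wf_graph_def)

lemma hom: "graph_hom (cart_prod Q Q) Q mv ma" using M by (simp add: multiplicative_def)

lemma hv: "\<forall>x\<in>verts (cart_prod Q Q). mv x \<in> verts Q" using hom unfolding graph_hom_def by blast
lemma ha: "\<forall>e\<in>arcs (cart_prod Q Q). ma e \<in> arcs Q \<and> src Q (ma e) = mv (src (cart_prod Q Q) e) \<and> tgt Q (ma e) = mv (tgt (cart_prod Q Q) e)"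
  using hom unfolding graph_hom_def by blast

lemma mvV: "x \<in> verts Q \<Longrightarrow> y \<in> verts Q \<Longrightarrow> mv (x,y) \<in> verts Q"
  using hv by (simp add: cart_prod_def InlI InrI)
lemma maL: "a \<in> arcs Q \<Longrightarrow> y \<in> verts Q \<Longrightarrow> ma (Inl (a,y)) \<in> arcs Q
   \<and> src Q (ma (Inl (a,y))) = mv (src Q a, y) \<and> tgt Q (ma (Inl (a,y))) = mv (tgt Q a, y)"
  using bspec[OF ha, of "Inl (a,y)"] by (simp add: cart_prod_def InlI InrI)
lemma maR: "x \<in> verts Q \<Longrightarrow> a \<in> arcs Q \<Longrightarrow> ma (Inr (x,a)) \<in> arcs Q
   \<and> src Q (ma (Inr (x,a))) = mv (x, src Q a) \<and> tgt Q (ma (Inr (x,a))) = mv (x, tgt Q a)"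
  using bspec[OF ha, of "Inr (x,a)"] by (simp add: cart_prod_def InlI InrI)

lemma av: "\<forall>p\<in>verts (cart_prod (cart_prod Q Q) Q). mv (map_prod mv id p) = mv (map_prod id mv (assoc_v p))"
  using M unfolding multiplicative_def by blast
lemma aa: "\<forall>e\<in>arcs (cart_prod (cart_prod Q Q) Q).
        ma (prod_arc_map mv ma id id e) = ma (prod_arc_map id id mv ma (assoc_a e))"
  using M unfolding multiplicative_def by blast

lemma A1: "x \<in> verts Q \<Longrightarrow> y \<in> verts Q \<Longrightarrow> z \<in> verts Q \<Longrightarrow> mv (mv (x,y),z) = mv (x, mv (y,z))"
  using bspec[OF av, of "((x,y),z)"] by (simp add: cart_prod_def assoc_v_def InlI InrI)
lemma A3: "x \<in> verts Q \<Longrightarrow> b \<in> arcs Q \<Longrightarrow> z \<in> verts Q \<Longrightarrow>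
   ma (Inl (ma (Inr (x,b)), z)) = ma (Inr (x, ma (Inl (b,z))))"
  using bspec[OF aa, of "Inl (Inr (x,b), z)"] by (simp add: cart_prod_def assoc_a_def prod_arc_map_def InlI InrI)
lemma A4: "x \<in> verts Q \<Longrightarrow> y \<in> verts Q \<Longrightarrow> c \<in> arcs Q \<Longrightarrow>
   ma (Inr (mv (x,y), c)) = ma (Inr (x, ma (Inr (y,c))))"
  using bspec[OF aa, of "Inr ((x,y), c)"] by (simp add: cart_prod_def assoc_a_def prod_arc_map_def InlI InrI)

lemma vc_valid: "as \<noteq> [] \<Longrightarrow> set as \<subseteq> arcs Q \<Longrightarrow> length w = length as \<Longrightarrow>
   \<exists>v\<in>verts Q. mu_cells mv ma (vc Q as w) = Inl v"
proof (induction as arbitrary: w)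
  case Nil then show ?case by simp
next
  case (Cons a as)
  then obtain b w' where w: "w = b # w'" by (cases w) auto
  have x: "(if b then tgt Q a else src Q a) \<in> verts Q" using wf Cons.prems by auto
  show ?case
  proof (cases "as = []")
    case True then show ?thesis using w x by simp
  next
    case False
    have lw: "length w' = length as" using Cons.prems w by simp
    obtain v where v: "v \<in> verts Q" "mu_cells mv ma (vc Q as w') = Inl v"
      using Cons.IH[OF False _ lw] Cons.prems by auto
    have ne: "vc Q as w' \<noteq> []" using False by (simp add: vc_def)
    show ?thesis using w x v mvV mu_Cons[OF ne] by auto
  qed
qed

lemma ac_valid: "i < length as \<Longrightarrow> set as \<subseteq> arcs Q \<Longrightarrow> length w = length as \<Longrightarrow>
   \<exists>e\<in>arcs Q. mu_cells mv ma (ac Q as i w) = Inr e"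
proof (induction as arbitrary: w i)
  case Nil then show ?case by simp
next
  case (Cons a as)
  then obtain b w' where w: "w = b # w'" by (cases w) auto
  have x: "(if b then tgt Q a else src Q a) \<in> verts Q" using wf Cons.prems by auto
  show ?case
  proof (cases i)
    case 0
    show ?thesis
    proof (cases "as = []")
      case True then show ?thesis using w 0 Cons.prems by simp
    next
      case False
      have lw: "length w' = length as" using Cons.prems w by simp
      obtain v where v: "v \<in> verts Q" "mu_cells mv ma (vc Q as w') = Inl v"
        using vc_valid[OF False _ lw] Cons.prems by auto
      have ne: "vc Q as w' \<noteq> []" using False by (simp add: vc_def)
      show ?thesis using w 0 v maL Cons.prems mu_Cons[OF ne] by auto
    qed
  next
    case (Suc i')
    then have ne: "as \<noteq> []" using Cons.prems by auto
    obtain e where "e \<in> arcs Q" "mu_cells mv ma (ac Q as i' w') = Inr e"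
      using Cons.IH[of i' w'] Cons.prems w Suc by auto
    have ne2: "ac Q as i' w' \<noteq> []" using ne by (simp add: ac_def)
    show ?thesis using w Suc maR x mu_Cons[OF ne2] \<open>e \<in> arcs Q\<close> \<open>mu_cells mv ma (ac Q as i' w') = Inr e\<close> by auto
  qed
qed

lemma fd0: "face_dim p = 0 \<Longrightarrow> length as = length p \<Longrightarrow> as \<noteq> [] \<Longrightarrow> set as \<subseteq> arcs Q \<Longrightarrow>
   \<exists>v\<in>verts Q. \<forall>w. mu_cells mv ma (vc Q as (face_fill p w)) = Inl v"
proof (induction p arbitrary: as)
  case Nil then show ?case by simp
next
  case (Cons q p)
  then obtain b where qq: "q = Some b" by (cases q) auto
  obtain a as' where as: "as = a # as'" using Cons.prems by (cases as) auto
  have x: "(if b then tgt Q a else src Q a) \<in> verts Q" using wf Cons.prems as by auto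
  show ?case
  proof (cases "as' = []")
    case True then show ?thesis using as qq x by simp
  next
    case False
    have f0: "face_dim p = 0" and l0: "length as' = length p" and sQ: "set as' \<subseteq> arcs Q"
      using Cons.prems as qq by auto
    obtain v where v: "v \<in> verts Q" "\<forall>w. mu_cells mv ma (vc Q as' (face_fill p w)) = Inl v"
      using Cons.IH[OF f0 l0 False sQ] by blast
    have "\<forall>w. mu_cells mv ma (vc Q as (face_fill (q # p) w)) = Inl (mv (if b then tgt Q a else src Q a, v))"
    proof
      fix w
      have ne: "vc Q as' (face_fill p w) \<noteq> []" using False by (simp add: vc_def)
      show "mu_cells mv ma (vc Q as (face_fill (q # p) w)) = Inl (mv (if b then tgt Q a else src Q a, v))"
        using v(2) as qq mu_Cons[OF ne] by simp
    qed
    then show ?thesis using mvV x v(1) by blast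
  qed
qed

lemma main: "length as = length p \<Longrightarrow> set as \<subseteq> arcs Q \<Longrightarrow> 1 \<le> face_dim p \<Longrightarrow>
  \<exists>bs. length bs = face_dim p \<and> set bs \<subseteq> arcs Q \<and>
   (\<forall>w. length w = face_dim p \<longrightarrow> mu_cells mv ma (vc Q as (face_fill p w)) = mu_cells mv ma (vc Q bs w)) \<and>
   (\<forall>i w. i < face_dim p \<longrightarrow> length w = face_dim p \<longrightarrow>
      mu_cells mv ma (ac Q as (free_positions p ! i) (face_fill p w)) = mu_cells mv ma (ac Q bs i w))"
proof (induction p arbitrary: as)
  case Nil then show ?case by (simp add: face_dim_def free_positions_def)
next
  case (Cons q p)
  obtain a as' where as: "as = a # as'" using Cons.prems by (cases as) auto
  have aQ: "a \<in> arcs Q" and asQ: "set as' \<subseteq> arcs Q" and len: "length as' = length p"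
    using Cons.prems as by auto
  show ?case
  proof (cases q)
    case (Some b)
    define x where "x = (if b then tgt Q a else src Q a)"
    have x: "x \<in> verts Q" using wf aQ x_def by auto
    have fdp: "1 \<le> face_dim p" using Cons.prems Some by simp
    obtain bs' where bs': "length bs' = face_dim p" "set bs' \<subseteq> arcs Q"
      "\<forall>w. length w = face_dim p \<longrightarrow> mu_cells mv ma (vc Q as' (face_fill p w)) = mu_cells mv ma (vc Q bs' w)"
      "\<forall>i w. i < face_dim p \<longrightarrow> length w = face_dim p \<longrightarrow>
      mu_cells mv ma (ac Q as' (free_positions p ! i) (face_fill p w)) = mu_cells mv ma (ac Q bs' i w)"
      using Cons.IH[OF len asQ fdp] by blast
    obtain b1 bs'' where b1: "bs' = b1 # bs''" using bs'(1) fdp by (cases bs') auto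
    have b1Q: "b1 \<in> arcs Q" and bsQ: "set bs'' \<subseteq> arcs Q" using bs'(2) b1 by auto
    define c where "c = ma (Inr (x, b1))"
    have c: "c \<in> arcs Q" "src Q c = mv (x, src Q b1)" "tgt Q c = mv (x, tgt Q b1)"
      using maR[OF x b1Q] c_def by auto
    have ne': "as' \<noteq> []" using len fdp fd_le[of p] by auto
    have V: "mu_cells mv ma (vc Q as (face_fill (q # p) w)) = mu_cells mv ma (vc Q (c # bs'') w)"
      if lw: "length w = face_dim (q # p)" for w
    proof -
      obtain w1 w'' where w: "w = w1 # w''" using lw Some fdp by (cases w) auto
      define y1 where "y1 = (if w1 then tgt Q b1 else src Q b1)"
      have y1: "y1 \<in> verts Q" using wf b1Q y1_def by auto
      have ne: "vc Q as' (face_fill p w) \<noteq> []" using ne' by (simp add: vc_def)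
      have "mu_cells mv ma (vc Q as (face_fill (q # p) w)) = cell_mul mv ma (Inl x) (mu_cells mv ma (vc Q bs' w))"
        using as Some mu_Cons[OF ne] bs'(3) lw x_def by simp
      also have "\<dots> = mu_cells mv ma (vc Q (c # bs'') w)"
      proof (cases "bs'' = []")
        case True then show ?thesis using b1 w c y1_def by simp
      next
        case False
        have lw'': "length w'' = length bs''" using lw w Some bs'(1) b1 by simp
        obtain r where r: "r \<in> verts Q" "mu_cells mv ma (vc Q bs'' w'') = Inl r"
          using vc_valid[OF False bsQ lw''] by blast
        have ne2: "vc Q bs'' w'' \<noteq> []" using False by (simp add: vc_def)
        show ?thesis using b1 w c r mu_Cons[OF ne2] A1[OF x y1 r(1)] y1_def
          by (cases w1) (simp_all add: mu_Cons[OF ne2])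
      qed
      finally show ?thesis .
    qed
    have Ar: "mu_cells mv ma (ac Q as (free_positions (q # p) ! i) (face_fill (q # p) w)) = mu_cells mv ma (ac Q (c # bs'') i w)"
      if li: "i < face_dim (q # p)" and lw: "length w = face_dim (q # p)" for i w
    proof -
      obtain w1 w'' where w: "w = w1 # w''" using lw Some fdp by (cases w) auto
      define y1 where "y1 = (if w1 then tgt Q b1 else src Q b1)"
      have y1: "y1 \<in> verts Q" using wf b1Q y1_def by auto
      have ip: "i < length (free_positions p)" using li Some by (simp add: face_dim_def)
      have ne: "ac Q as' (free_positions p ! i) (face_fill p w) \<noteq> []" using ne' by (simp add: ac_def)
      have "mu_cells mv ma (ac Q as (free_positions (q # p) ! i) (face_fill (q # p) w)) = cell_mul mv ma (Inl x) (mu_cells mv ma (ac Q bs' i w))"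
        using as Some mu_Cons[OF ne] bs'(4) lw li x_def ip by simp
      also have "\<dots> = mu_cells mv ma (ac Q (c # bs'') i w)"
      proof (cases i)
        case 0
        show ?thesis
        proof (cases "bs'' = []")
          case True then show ?thesis using b1 w c 0 c_def by simp
        next
          case False
          have lw'': "length w'' = length bs''" using lw w Some bs'(1) b1 by simp
          obtain r where r: "r \<in> verts Q" "mu_cells mv ma (vc Q bs'' w'') = Inl r"
            using vc_valid[OF False bsQ lw''] by blast
          have ne2: "vc Q bs'' w'' \<noteq> []" using False by (simp add: vc_def)
          show ?thesis using b1 w c r 0 A3[OF x b1Q r(1)] c_def
            by (simp add: mu_Cons[OF ne2])
        qed
      next
        case (Suc i')
        have lw'': "length w'' = length bs''" using lw w Some bs'(1) b1 by simp
        have il: "i' < length bs''" using li Suc Some bs'(1) b1 by simp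
        obtain r where r: "r \<in> arcs Q" "mu_cells mv ma (ac Q bs'' i' w'') = Inr r"
          using ac_valid[OF il bsQ lw''] by blast
        have ne2: "ac Q bs'' i' w'' \<noteq> []" using il by (cases bs'') (simp_all add: ac_def)
        show ?thesis using b1 w c r Suc A4[OF x y1 r(1)] y1_def
          by (cases w1) (simp_all add: mu_Cons[OF ne2])
      qed
      finally show ?thesis .
    qed
    show ?thesis
      apply (rule exI[of _ "c # bs''"])
      using V Ar bs'(1) b1 c(1) bsQ Some by auto
  next
    case None
    show ?thesis
    proof (cases "face_dim p = 0")
      case True
      show ?thesis
      proof (cases "as' = []")
        case True
        then have p: "p = []" using len by simp
        show ?thesis
          apply (rule exI[of _ "[a]"])
          using aQ None p as True
          by (auto simp: free_positions_def face_dim_def less_Suc_eq_0_disj length_Suc_conv)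
      next
        case False
        obtain v where v: "v \<in> verts Q" "\<forall>w. mu_cells mv ma (vc Q as' (face_fill p w)) = Inl v"
          using fd0[OF \<open>face_dim p = 0\<close> len False asQ] by blast
        define d where "d = ma (Inl (a, v))"
        have d: "d \<in> arcs Q" "src Q d = mv (src Q a, v)" "tgt Q d = mv (tgt Q a, v)"
          using maL[OF aQ v(1)] d_def by auto
        have ne: "\<And>w. vc Q as' (face_fill p w) \<noteq> []" using False by (simp add: vc_def)
        have fp0: "free_positions p = []" using True by (simp add: face_dim_def)
        show ?thesis
          apply (rule exI[of _ "[d]"])
          using d v None as True ne mu_Cons[OF ne] fp0
          by (auto simp: length_Suc_conv d_def)
      qed
    next
      case False
      then have fdp: "1 \<le> face_dim p" by simp
      obtain bs' where bs': "length bs' = face_dim p" "set bs' \<subseteq> arcs Q"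
        "\<forall>w. length w = face_dim p \<longrightarrow> mu_cells mv ma (vc Q as' (face_fill p w)) = mu_cells mv ma (vc Q bs' w)"
        "\<forall>i w. i < face_dim p \<longrightarrow> length w = face_dim p \<longrightarrow>
        mu_cells mv ma (ac Q as' (free_positions p ! i) (face_fill p w)) = mu_cells mv ma (ac Q bs' i w)"
        using Cons.IH[OF len asQ fdp] by blast
      have ne': "as' \<noteq> []" using len fdp fd_le[of p] by auto
      have nb: "bs' \<noteq> []" using bs'(1) fdp by auto
      have V: "mu_cells mv ma (vc Q as (face_fill (q # p) w)) = mu_cells mv ma (vc Q (a # bs') w)"
        if lw: "length w = face_dim (q # p)" for w
      proof -
        obtain w0 w' where w: "w = w0 # w'" using lw None by (cases w) auto
        have ne: "vc Q as' (face_fill p w') \<noteq> []" using ne' by (simp add: vc_def)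
        have ne2: "vc Q bs' w' \<noteq> []" using nb by (simp add: vc_def)
        show ?thesis using as None w mu_Cons[OF ne] mu_Cons[OF ne2] bs'(3) lw by simp
      qed
      have Ar: "mu_cells mv ma (ac Q as (free_positions (q # p) ! i) (face_fill (q # p) w)) = mu_cells mv ma (ac Q (a # bs') i w)"
        if li: "i < face_dim (q # p)" and lw: "length w = face_dim (q # p)" for i w
      proof -
        obtain w0 w' where w: "w = w0 # w'" using lw None by (cases w) auto
        show ?thesis
        proof (cases i)
          case 0
          have ne: "vc Q as' (face_fill p w') \<noteq> []" using ne' by (simp add: vc_def)
          have ne2: "vc Q bs' w' \<noteq> []" using nb by (simp add: vc_def)
          show ?thesis using as None w 0 mu_Cons[OF ne] mu_Cons[OF ne2] bs'(3) lw by simp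
        next
          case (Suc i')
          have ip: "i' < length (free_positions p)" using li None Suc by (simp add: face_dim_def)
          have ne: "ac Q as' (free_positions p ! i') (face_fill p w') \<noteq> []" using ne' by (simp add: ac_def)
          have ne2: "ac Q bs' i' w' \<noteq> []" using nb by (simp add: ac_def)
          show ?thesis using as None w Suc mu_Cons[OF ne] mu_Cons[OF ne2] bs'(4) lw li ip by simp
        qed
      qed
      show ?thesis
        apply (rule exI[of _ "a # bs'"])
        using V Ar bs'(1,2) aQ None by auto
    qed
  qed
qed
end

lemma pcv: "prod_cube_v mv ma Q as w = projl (mu_cells mv ma (vc Q as w))"
  by (simp add: prod_cube_v_def vc_def)
lemma pca: "prod_cube_a mv ma Q as (i, w) = projr (mu_cells mv ma (ac Q as i w))"
  by (simp add: prod_cube_a_def ac_def)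

theorem mainTheorem4:
  fixes Q :: "('v, 'a) graph"
    and mv :: "'v \<times> 'v \<Rightarrow> 'v"
    and ma :: "('a \<times> 'v) + ('v \<times> 'a) \<Rightarrow> 'a"
    and n k :: nat
    and cv :: "bool list \<Rightarrow> 'v" and ca :: "nat \<times> bool list \<Rightarrow> 'a"
    and p :: "bool option list"
  assumes "multiplicative Q mv ma"
    and "is_product_cube Q mv ma n cv ca"
    and "length p = n"
    and "face_dim p = k"
    and "1 \<le> k"
  shows "is_product_cube Q mv ma k (cv \<circ> face_fill p) (ca \<circ> face_arc p)"
proof -
  obtain as where as: "length as = n" "set as \<subseteq> arcs Q"
    "\<forall>w\<in>verts (cube_graph n). cv w = prod_cube_v mv ma Q as w"
    "\<forall>e\<in>arcs (cube_graph n). ca e = prod_cube_a mv ma Q as e"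
    using assms(2) unfolding is_product_cube_def by blast
  obtain bs where bs: "length bs = face_dim p" "set bs \<subseteq> arcs Q"
   "\<forall>w. length w = face_dim p \<longrightarrow> mu_cells mv ma (vc Q as (face_fill p w)) = mu_cells mv ma (vc Q bs w)"
   "\<forall>i w. i < face_dim p \<longrightarrow> length w = face_dim p \<longrightarrow>
      mu_cells mv ma (ac Q as (free_positions p ! i) (face_fill p w)) = mu_cells mv ma (ac Q bs i w)"
    using main[OF assms(1), of as p] as(1,2) assms(3,4,5) by auto
  show ?thesis unfolding is_product_cube_def
  proof (intro exI[of _ bs] conjI ballI)
    show "length bs = k" using bs(1) assms(4) by simp
    show "set bs \<subseteq> arcs Q" by (rule bs(2))
  next
    fix w assume w: "w \<in> verts (cube_graph k)"
    then have lw: "length w = face_dim p" using assms(4) by (simp add: cube_graph_def)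
    have "face_fill p w \<in> verts (cube_graph n)" using assms(3) by (simp add: cube_graph_def)
    then show "(cv \<circ> face_fill p) w = prod_cube_v mv ma Q bs w"
      using as(3) bs(3) lw by (simp add: pcv)
  next
    fix e assume e: "e \<in> arcs (cube_graph k)"
    obtain i w where ew: "e = (i, w)" by (cases e)
    have i: "i < face_dim p" and lw: "length w = face_dim p" and nw: "\<not> w ! i"
      using e ew assms(4) by (auto simp: cube_graph_def)
    have "face_arc p e \<in> arcs (cube_graph n)"
      using ew fp_lt[OF i] assms(3) ff_fp[OF lw i] nw by (simp add: cube_graph_def face_arc_def)
    then show "(ca \<circ> face_arc p) e = prod_cube_a mv ma Q bs e"
      using as(4) bs(4) lw i ew by (simp add: pca face_arc_def)
  qed
qed

end
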